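(* Let $n\ge1$, $d=2^n$. For all unitaries $U,V\in\mathcal{U}(d)$, $$|\mathcal{M}_{lin}(U)-\mathcal{M}_{lin}(V)|\le\frac{8d}{4+d}\,\|U-V\|_2,$$ where $\|\cdot\|_2$ is the Frobenius norm; in particular $\mathcal{M}_{lin}$ is Lipschitz on $\mathcal{U}(d)$ with a constant bounded independently of $d$.
   Context: $\mathcal{P}_n$ is the set of the $4^n$ $n$-qubit Pauli strings $\sigma_1\otimes\cdots\otimes\sigma_n$, $\sigma_i\in\{I,X,Y,Z\}$. For a pure state, $M_{lin}(|\psi\rangle)=1-d^{-1}\sum_{P\in\mathcal{P}_n}\langle\psi|P|\psi\rangle^4$. $\mathrm{STAB}$ is the finite set of $n$-qubit pure stabilizer states (states $C|0\rangle^{\otimes n}$ with $C$ a Clifford unitary, i.e. $CPC^\dagger\in\{\pm1,\pm i\}\mathcal{P}_n$ for all $P$). $\mathcal{M}_{lin}(U)=\frac{1}{|\mathrm{STAB}|}\sum_{|\psi\rangle\in\mathrm{STAB}}M_{lin}(U|\psi\rangle)$. *)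

theory Defs
  imports Complex_Main "Jordan_Normal_Form.Matrix"
begin

definition dagger :: "complex mat \<Rightarrow> complex mat" where
  "dagger A = mat (dim_col A) (dim_row A) (\<lambda>(i,j). cnj (A $$ (j,i)))"

definition unitary_mat :: "nat \<Rightarrow> complex mat \<Rightarrow> bool" where
  "unitary_mat d U \<longleftrightarrow> U \<in> carrier_mat d d \<and> U * dagger U = 1\<^sub>m d"

definition kron :: "complex mat \<Rightarrow> complex mat \<Rightarrow> complex mat" where
  "kron A B = mat (dim_row A * dim_row B) (dim_col A * dim_col B)
     (\<lambda>(i,j). A $$ (i div dim_row B, j div dim_col B) * B $$ (i mod dim_row B, j mod dim_col B))"

text \<open>Single-qubit Paulis: 0 = I, 1 = X, 2 = Y, 3 = Z.\<close>
definition pauli :: "nat \<Rightarrow> complex mat" where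
  "pauli k = (if k = 0 then mat_of_rows_list 2 [[1,0],[0,1]]
      else if k = 1 then mat_of_rows_list 2 [[0,1],[1,0]]
      else if k = 2 then mat_of_rows_list 2 [[0,-\<i>],[\<i>,0]]
      else mat_of_rows_list 2 [[1,0],[0,-1]])"

definition pauli_string :: "nat list \<Rightarrow> complex mat" where
  "pauli_string xs = foldr (\<lambda>a M. kron (pauli a) M) xs (1\<^sub>m 1)"

definition paulis :: "nat \<Rightarrow> complex mat set" where
  "paulis n = {pauli_string xs | xs. length xs = n \<and> set xs \<subseteq> {0..<4}}"

definition clifford :: "nat \<Rightarrow> complex mat \<Rightarrow> bool" where
  "clifford n C \<longleftrightarrow> unitary_mat (2^n) C \<and>
     (\<forall>P\<in>paulis n. \<exists>c\<in>{1, -1, \<i>, -\<i>}. \<exists>Q\<in>paulis n. C * P * dagger C = c \<cdot>\<^sub>m Q)"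

definition zero_proj :: "nat \<Rightarrow> complex mat" where
  "zero_proj n = mat (2^n) (2^n) (\<lambda>(i,j). if i = 0 \<and> j = 0 then 1 else 0)"

text \<open>Stabilizer states, represented by their (phase-free) projectors \<open>|\<psi>\<rangle>\<langle>\<psi>|\<close>,
  \<open>|\<psi>\<rangle> = C|0\<rangle>^{\<otimes>n}\<close> with \<open>C\<close> Clifford.\<close>
definition STAB :: "nat \<Rightarrow> complex mat set" where
  "STAB n = {C * zero_proj n * dagger C | C. clifford n C}"

definition mtrace :: "complex mat \<Rightarrow> complex" where
  "mtrace A = (\<Sum>i<dim_row A. A $$ (i,i))"

text \<open>Linear stabilizer entropy of the pure state with projector \<open>\<rho>\<close>;
  \<open>\<langle>\<psi>|P|\<psi>\<rangle> = tr(P\<rho>)\<close> (real, as P is Hermitian).\<close>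
definition M_lin_state :: "nat \<Rightarrow> complex mat \<Rightarrow> real" where
  "M_lin_state n \<rho> = 1 - (1 / 2^n) * (\<Sum>P\<in>paulis n. (Re (mtrace (P * \<rho>)))^4)"

definition M_lin :: "nat \<Rightarrow> complex mat \<Rightarrow> real" where
  "M_lin n U = (\<Sum>\<rho>\<in>STAB n. M_lin_state n (U * \<rho> * dagger U)) / real (card (STAB n))"

definition frob_norm :: "complex mat \<Rightarrow> real" where
  "frob_norm A = sqrt (\<Sum>i<dim_row A. \<Sum>j<dim_col A. (cmod (A $$ (i,j)))^2)"

end

theory Submission
  imports Defs "Jordan_Normal_Form.Determinant"
begin

lemma mrl_dims: "dim_row (mat_of_rows_list n rs) = length rs" "dim_col (mat_of_rows_list n rs) = n"
  by (simp_all add: mat_of_rows_list_def)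
lemma pauli_dims[simp]: "dim_row (pauli k) = 2" "dim_col (pauli k) = 2"
  unfolding pauli_def by (simp_all add: mrl_dims)

definition pv :: "nat \<Rightarrow> nat \<Rightarrow> nat \<Rightarrow> complex" where
  "pv k i j = (if k=0 then (if i=j then 1 else 0) else if k=1 then (if i=j then 0 else 1)
     else if k=2 then (if i=j then 0 else if i=0 then -\<i> else \<i>)
     else (if i=j then (if i=0 then 1 else -1) else 0))"

lemma less2: "(i::nat) < 2 \<longleftrightarrow> i = 0 \<or> i = 1" by auto

lemma pauli_idx: assumes "i < 2" "j < 2" shows "pauli k $$ (i,j) = pv k i j"
proof -
  have "i = 0 \<or> i = 1" "j = 0 \<or> j = 1" using assms by auto
  thus ?thesis by (auto simp: pauli_def pv_def mat_of_rows_list_def)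
qed

lemma sum4: "(\<Sum>a<(4::nat). f a) = f 0 + f 1 + f 2 + (f 3 :: 'a::comm_monoid_add)"
  by (simp add: eval_nat_numeral add.assoc)
lemma sum2: "(\<Sum>a<(2::nat). f a) = f 0 + (f 1 :: 'a::comm_monoid_add)"
  by (simp add: eval_nat_numeral)

lemma pv_herm: "i < 2 \<Longrightarrow> j < 2 \<Longrightarrow> cnj (pv k j i) = pv k i j"
  by (auto simp: pv_def less2)
lemma pv_inv: "i < 2 \<Longrightarrow> j < 2 \<Longrightarrow> (\<Sum>q<2. pv k i q * pv k q j) = (if i = j then 1 else 0)"
  by (auto simp: pv_def less2 sum2)
lemma pv_compl: "i < 2 \<Longrightarrow> j < 2 \<Longrightarrow> k < 2 \<Longrightarrow> l < 2 \<Longrightarrow>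
   (\<Sum>a<4. pv a i j * pv a k l) = (if i = l \<and> j = k then 2 else 0)"
  by (auto simp: pv_def less2 sum4)
lemma pv_orth: "a < 4 \<Longrightarrow> b < 4 \<Longrightarrow>
   (\<Sum>p<2. \<Sum>q<2. pv a q p * pv b p q) = (if a = b then 2 else 0)"
  by (auto simp: pv_def sum2 less2 eval_nat_numeral less_Suc_eq)

lemma ps_Cons: "pauli_string (a # xs) = kron (pauli a) (pauli_string xs)"
  by (simp add: pauli_string_def)

lemma ps_dims[simp]: "dim_row (pauli_string xs) = 2^length xs" "dim_col (pauli_string xs) = 2^length xs"
  by (induction xs) (auto simp: ps_Cons kron_def pauli_string_def[of "[]"])

lemma div_lt2: "i < 2 * (m::nat) \<Longrightarrow> i div m < 2"
  by (simp add: less_mult_imp_div_less mult.commute)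
lemma mod_lt: "i < 2 * (m::nat) \<Longrightarrow> i mod m < m"
  by (cases "m = 0") auto

lemma ps_Cons_idx:
  assumes "i < 2 * 2^length xs" "j < 2 * 2^length xs"
  shows "pauli_string (a # xs) $$ (i,j) =
    pv a (i div 2^length xs) (j div 2^length xs) *
    pauli_string xs $$ (i mod 2^length xs, j mod 2^length xs)"
  using assms by (simp add: ps_Cons kron_def pauli_idx div_lt2)

lemma ps_Nil_idx: "pauli_string [] $$ (0,0) = 1"
  by (simp add: pauli_string_def)

lemma eq_divmod: "(i::nat) = j \<longleftrightarrow> i div m = j div m \<and> i mod m = j mod m"
  by (metis div_mult_mod_eq)

lemma ps_herm: "i < 2^length xs \<Longrightarrow> j < 2^length xs \<Longrightarrow>
   cnj (pauli_string xs $$ (j,i)) = pauli_string xs $$ (i,j)"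
proof (induction xs arbitrary: i j)
  case Nil thus ?case by (simp add: ps_Nil_idx)
next
  case (Cons a xs)
  let ?m = "2^length xs :: nat"
  have m: "i < 2 * ?m" "j < 2 * ?m" using Cons.prems by auto
  show ?case using m
    by (simp add: ps_Cons_idx pv_herm div_lt2 mod_lt Cons.IH)
qed

lemma sum_split2: "(\<Sum>j<2*m. g j) = (\<Sum>j<m. g j) + (\<Sum>j<m. g (m + j::nat))"
proof -
  have "(\<Sum>j<2*m. g j) = (\<Sum>j<m+m. g j)" by (simp add: mult_2)
  also have "\<dots> = sum g {0..<m} + sum g {m..<m+m}"
    by (simp add: lessThan_atLeast0 sum.atLeastLessThan_concat)
  also have "sum g {m..<m+m} = (\<Sum>j=0..<m. g (j + m))"
    using sum.shift_bounds_nat_ivl[of g 0 m m] by simp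
  finally show ?thesis by (simp add: lessThan_atLeast0 add.commute)
qed


lemma sum_divmod:
  assumes "(m::nat) > 0"
  shows "(\<Sum>i<2*m. G (i div m) (i mod m)) = (\<Sum>p<2. \<Sum>r<m. G p r)"
proof -
  have "(\<Sum>i<2*m. G (i div m) (i mod m)) = (\<Sum>j<m. G (j div m) (j mod m)) + (\<Sum>j<m. G ((m+j) div m) ((m+j) mod m))"
    by (rule sum_split2)
  also have "(\<Sum>j<m. G (j div m) (j mod m)) = (\<Sum>j<m. G 0 j)"
    by (rule sum.cong) auto
  also have "(\<Sum>j<m. G ((m+j) div m) ((m+j) mod m)) = (\<Sum>j<m. G 1 j)"
    using assms by (intro sum.cong) auto
  finally show ?thesis by (simp add: sum2)
qed

lemma ps_inv: "i < 2^length xs \<Longrightarrow> k < 2^length xs \<Longrightarrow>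
   (\<Sum>j<2^length xs. pauli_string xs $$ (i,j) * pauli_string xs $$ (j,k)) = (if i = k then 1 else 0)"
proof (induction xs arbitrary: i k)
  case Nil thus ?case by (simp add: ps_Nil_idx)
next
  case (Cons a xs)
  let ?m = "2^length xs :: nat"
  have m: "i < 2 * ?m" "k < 2 * ?m" using Cons.prems by auto
  let ?P = "pauli_string xs"
  have "(\<Sum>j<2^length (a#xs). pauli_string (a#xs) $$ (i,j) * pauli_string (a#xs) $$ (j,k))
     = (\<Sum>j<2*?m. (\<lambda>p r. pv a (i div ?m) p * ?P $$ (i mod ?m, r) * (pv a p (k div ?m) * ?P $$ (r, k mod ?m))) (j div ?m) (j mod ?m))"
    using m by (intro sum.cong) (auto simp: ps_Cons_idx)
  also have "\<dots> = (\<Sum>p<2. \<Sum>r<?m. pv a (i div ?m) p * ?P $$ (i mod ?m, r) * (pv a p (k div ?m) * ?P $$ (r, k mod ?m)))"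
    by (rule sum_divmod) simp
  also have "\<dots> = (\<Sum>p<2. pv a (i div ?m) p * pv a p (k div ?m)) * (\<Sum>r<?m. ?P $$ (i mod ?m, r) * ?P $$ (r, k mod ?m))"
    unfolding sum_product by (intro sum.cong refl) (simp only: mult_ac)
  also have "\<dots> = (if i div ?m = k div ?m then 1 else 0) * (if i mod ?m = k mod ?m then 1 else 0)"
    using m by (simp add: pv_inv div_lt2 mod_lt Cons.IH)
  also have "\<dots> = (if i = k then 1 else 0)"
    using eq_divmod[of i k ?m] by auto
  finally show ?case .
qed

lemma ps_id: "i < 2^n \<Longrightarrow> j < 2^n \<Longrightarrow> pauli_string (replicate n 0) $$ (i,j) = (if i = j then 1 else 0)"
proof (induction n arbitrary: i j)
  case 0 thus ?case by (simp add: ps_Nil_idx)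
next
  case (Suc n)
  have m: "i < 2 * 2^n" "j < 2 * 2^n" using Suc.prems by auto
  show ?case using m eq_divmod[of i j "2^n"]
    by (simp add: ps_Cons_idx div_lt2 mod_lt Suc.IH pv_def)
qed

lemma sum_divmod2:
  assumes "(m::nat) > 0"
  shows "(\<Sum>i<2*m. \<Sum>j<2*m. G (i div m) (j div m) (i mod m) (j mod m)) = (\<Sum>p<2. \<Sum>q<2. \<Sum>r<m. \<Sum>s<m. G p q r s)"
proof -
  have "(\<Sum>i<2*m. \<Sum>j<2*m. G (i div m) (j div m) (i mod m) (j mod m))
     = (\<Sum>i<2*m. \<Sum>q<2. \<Sum>s<m. G (i div m) q (i mod m) s)"
    by (intro sum.cong refl sum_divmod[OF assms])
  also have "\<dots> = (\<Sum>p<2. \<Sum>r<m. \<Sum>q<2. \<Sum>s<m. G p q r s)"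
    by (rule sum_divmod[OF assms])
  also have "\<dots> = (\<Sum>p<2. \<Sum>q<2. \<Sum>r<m. \<Sum>s<m. G p q r s)"
    by (intro sum.cong refl sum.swap)
  finally show ?thesis .
qed

lemma ps_orth: "length ys = length xs \<Longrightarrow> set xs \<subseteq> {0..<4} \<Longrightarrow> set ys \<subseteq> {0..<4} \<Longrightarrow>
   (\<Sum>i<2^length xs. \<Sum>j<2^length xs. pauli_string xs $$ (j,i) * pauli_string ys $$ (i,j))
     = (if xs = ys then 2^length xs else 0)"
proof (induction xs arbitrary: ys)
  case Nil thus ?case by (simp add: ps_Nil_idx)
next
  case (Cons a xs)
  obtain b ys' where ys: "ys = b # ys'" "length ys' = length xs" using Cons.prems(1) by (cases ys) auto
  let ?m = "2^length xs :: nat"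
  let ?P = "pauli_string xs" and ?Q = "pauli_string ys'"
  have ab: "a < 4" "b < 4" "set xs \<subseteq> {0..<4}" "set ys' \<subseteq> {0..<4}" using Cons.prems ys by auto
  have "(\<Sum>i<2^length (a#xs). \<Sum>j<2^length (a#xs). pauli_string (a#xs) $$ (j,i) * pauli_string ys $$ (i,j))
     = (\<Sum>i<2*?m. \<Sum>j<2*?m. (\<lambda>p q r s. pv a q p * ?P $$ (s, r) * (pv b p q * ?Q $$ (r, s))) (i div ?m) (j div ?m) (i mod ?m) (j mod ?m))"
    using ys by (intro sum.cong refl) (auto simp: ps_Cons_idx)
  also have "\<dots> = (\<Sum>p<2. \<Sum>q<2. \<Sum>r<?m. \<Sum>s<?m. pv a q p * ?P $$ (s, r) * (pv b p q * ?Q $$ (r, s)))"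
    by (rule sum_divmod2) simp
  also have "\<dots> = (\<Sum>p<2. \<Sum>q<2. pv a q p * pv b p q) * (\<Sum>r<?m. \<Sum>s<?m. ?P $$ (s, r) * ?Q $$ (r, s))"
  proof -
    have "(\<Sum>p<2. \<Sum>q<2. pv a q p * pv b p q) * (\<Sum>r<?m. \<Sum>s<?m. ?P $$ (s, r) * ?Q $$ (r, s))
      = (\<Sum>p<2. \<Sum>q<2. \<Sum>r<?m. \<Sum>s<?m. (pv a q p * pv b p q) * (?P $$ (s, r) * ?Q $$ (r, s)))"
      unfolding sum_product by (rule sum.cong[OF refl], rule sum.swap)
    also have "\<dots> = (\<Sum>p<2. \<Sum>q<2. \<Sum>r<?m. \<Sum>s<?m. pv a q p * ?P $$ (s, r) * (pv b p q * ?Q $$ (r, s)))"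
      by (intro sum.cong refl) (simp only: mult_ac)
    finally show ?thesis by (rule sym)
  qed
  also have "\<dots> = (if a = b then 2 else 0) * (if xs = ys' then 2^length xs else 0)"
  proof -
    have IH: "(\<Sum>r<?m. \<Sum>s<?m. ?P $$ (s, r) * ?Q $$ (r, s)) = (if xs = ys' then 2^length xs else 0)"
      by (rule Cons.IH[OF ys(2) ab(3) ab(4)])
    show ?thesis unfolding IH pv_orth[OF ab(1,2)] ..
  qed
  also have "\<dots> = (if a # xs = ys then 2^length (a#xs) else 0)"
    unfolding ys(1) by simp
  finally show ?case .
qed


definition LL :: "nat \<Rightarrow> nat list set" where
  "LL n = {xs. length xs = n \<and> set xs \<subseteq> {0..<4}}"

lemma LL_finite: "finite (LL n)"
proof -
  have "LL n = {xs. set xs \<subseteq> {0..<4} \<and> length xs = n}" by (auto simp: LL_def)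
  thus ?thesis using finite_lists_length_eq[of "{0..<4::nat}" n] by simp
qed

lemma LL_Suc: "LL (Suc n) = (\<lambda>(a,xs). a # xs) ` ({..<4} \<times> LL n)"
proof
  show "LL (Suc n) \<subseteq> (\<lambda>(a,xs). a # xs) ` ({..<4} \<times> LL n)"
  proof
    fix ys assume "ys \<in> LL (Suc n)"
    then obtain a xs where "ys = a # xs" "length xs = n" "a < 4" "set xs \<subseteq> {0..<4}"
      by (cases ys) (auto simp: LL_def)
    thus "ys \<in> (\<lambda>(a,xs). a # xs) ` ({..<4} \<times> LL n)"
      by (auto simp: LL_def image_iff)
  qed
qed (auto simp: LL_def)

lemma sum_LL_Suc: "(\<Sum>xs\<in>LL (Suc n). f xs) = (\<Sum>a<4. \<Sum>xs\<in>LL n. f (a # xs))"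
proof -
  have inj: "inj_on (\<lambda>(a,xs). a # xs) ({..<4::nat} \<times> LL n)"
    by (auto simp: inj_on_def)
  have "(\<Sum>xs\<in>LL (Suc n). f xs) = (\<Sum>p\<in>{..<4} \<times> LL n. f ((\<lambda>(a,xs). a # xs) p))"
    unfolding LL_Suc by (rule sum.reindex[OF inj, unfolded comp_def])
  also have "\<dots> = (\<Sum>a<4. \<Sum>xs\<in>LL n. f (a # xs))"
    unfolding sum.cartesian_product by (intro sum.cong refl) auto
  finally show ?thesis .
qed

lemma ps_compl: "i < 2^n \<Longrightarrow> j < 2^n \<Longrightarrow> k < 2^n \<Longrightarrow> l < 2^n \<Longrightarrow>
  (\<Sum>xs\<in>LL n. pauli_string xs $$ (i,j) * pauli_string xs $$ (k,l)) = (if i = l \<and> j = k then 2^n else 0)"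
proof (induction n arbitrary: i j k l)
  case 0
  have "LL 0 = {[]}" by (auto simp: LL_def)
  thus ?case using 0 by (simp add: ps_Nil_idx)
next
  case (Suc n)
  let ?m = "2^n :: nat"
  have m: "i < 2 * ?m" "j < 2 * ?m" "k < 2 * ?m" "l < 2 * ?m" using Suc.prems by auto
  have "(\<Sum>xs\<in>LL (Suc n). pauli_string xs $$ (i,j) * pauli_string xs $$ (k,l))
    = (\<Sum>a<4. \<Sum>xs\<in>LL n. (pv a (i div ?m) (j div ?m) * pv a (k div ?m) (l div ?m)) *
         (pauli_string xs $$ (i mod ?m, j mod ?m) * pauli_string xs $$ (k mod ?m, l mod ?m)))"
    unfolding sum_LL_Suc
    by (intro sum.cong refl) (use m in \<open>auto simp: ps_Cons_idx LL_def\<close>)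
  also have "\<dots> = (\<Sum>a<4. pv a (i div ?m) (j div ?m) * pv a (k div ?m) (l div ?m)) *
         (\<Sum>xs\<in>LL n. pauli_string xs $$ (i mod ?m, j mod ?m) * pauli_string xs $$ (k mod ?m, l mod ?m))"
    by (rule sum_product[symmetric])
  also have "\<dots> = (if i div ?m = l div ?m \<and> j div ?m = k div ?m then 2 else 0) *
       (if i mod ?m = l mod ?m \<and> j mod ?m = k mod ?m then 2^n else 0)"
    using m by (simp add: pv_compl div_lt2 mod_lt Suc.IH)
  also have "\<dots> = (if i = l \<and> j = k then 2^Suc n else 0)"
    using eq_divmod[of i l ?m] eq_divmod[of j k ?m] by auto
  finally show ?case .
qed

lemma paulis_LL: "paulis n = pauli_string ` LL n"
  by (auto simp: paulis_def LL_def)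

lemma ps_inj: "inj_on pauli_string (LL n)"
proof (rule inj_onI)
  fix xs ys assume xs: "xs \<in> LL n" and ys: "ys \<in> LL n" and eq: "pauli_string xs = pauli_string ys"
  have l: "length ys = length xs" "set xs \<subseteq> {0..<4}" "set ys \<subseteq> {0..<4}" using xs ys by (auto simp: LL_def)
  have "(\<Sum>i<2^length xs. \<Sum>j<2^length xs. pauli_string xs $$ (j,i) * pauli_string ys $$ (i,j))
     = (if xs = xs then 2^length xs else 0)"
    unfolding eq[symmetric] by (rule ps_orth) (use l in auto)
  moreover have "(\<Sum>i<2^length xs. \<Sum>j<2^length xs. pauli_string xs $$ (j,i) * pauli_string ys $$ (i,j))
     = (if xs = ys then 2^length xs else 0)"
    by (rule ps_orth[OF l])
  ultimately show "xs = ys" by (auto split: if_splits)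
qed

lemma sum_paulis: "(\<Sum>P\<in>paulis n. f P) = (\<Sum>xs\<in>LL n. f (pauli_string xs))"
  unfolding paulis_LL by (rule sum.reindex[OF ps_inj, unfolded comp_def])

lemma CS_real:
  fixes a b :: "'x \<Rightarrow> real"
  shows "(\<Sum>i\<in>I. a i * b i)^2 \<le> (\<Sum>i\<in>I. (a i)^2) * (\<Sum>i\<in>I. (b i)^2)"
proof -
  have "0 \<le> (\<Sum>i\<in>I. \<Sum>j\<in>I. (a i * b j - a j * b i)^2)" by (simp add: sum_nonneg)
  also have "\<dots> = (\<Sum>i\<in>I. \<Sum>j\<in>I. (a i)^2 * (b j)^2 + (b i)^2 * (a j)^2 - 2 * ((a i * b i) * (a j * b j)))"
    by (intro sum.cong refl) (simp add: power2_eq_square algebra_simps)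
  also have "\<dots> = (\<Sum>i\<in>I. \<Sum>j\<in>I. (a i)^2 * (b j)^2) + (\<Sum>i\<in>I. \<Sum>j\<in>I. (b i)^2 * (a j)^2)
      - 2 * (\<Sum>i\<in>I. \<Sum>j\<in>I. (a i * b i) * (a j * b j))"
    by (simp add: sum.distrib sum_subtractf sum_distrib_left)
  also have "\<dots> = 2 * ((\<Sum>i\<in>I. (a i)^2) * (\<Sum>i\<in>I. (b i)^2) - (\<Sum>i\<in>I. a i * b i)^2)"
  proof -
    have h1: "(\<Sum>i\<in>I. \<Sum>j\<in>I. (a i)^2 * (b j)^2) = (\<Sum>i\<in>I. (a i)^2) * (\<Sum>i\<in>I. (b i)^2)"
      by (rule sum_product[symmetric])
    have h2: "(\<Sum>i\<in>I. \<Sum>j\<in>I. (b i)^2 * (a j)^2) = (\<Sum>i\<in>I. (b i)^2) * (\<Sum>i\<in>I. (a i)^2)"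
      by (rule sum_product[symmetric])
    have h3: "(\<Sum>i\<in>I. \<Sum>j\<in>I. (a i * b i) * (a j * b j)) = (\<Sum>i\<in>I. a i * b i) * (\<Sum>i\<in>I. a i * b i)"
      by (rule sum_product[symmetric])
    show ?thesis unfolding h1 h2 h3 by (simp add: power2_eq_square algebra_simps)
  qed
  finally show ?thesis by simp
qed

lemma CS_cplx:
  fixes x y :: "'x \<Rightarrow> complex"
  shows "(cmod (\<Sum>i\<in>I. x i * y i))^2 \<le> (\<Sum>i\<in>I. (cmod (x i))^2) * (\<Sum>i\<in>I. (cmod (y i))^2)"
proof -
  have "cmod (\<Sum>i\<in>I. x i * y i) \<le> (\<Sum>i\<in>I. cmod (x i) * cmod (y i))"
    by (metis (no_types, lifting) norm_mult norm_sum sum.cong)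
  hence "(cmod (\<Sum>i\<in>I. x i * y i))^2 \<le> (\<Sum>i\<in>I. cmod (x i) * cmod (y i))^2"
    by (simp add: power_mono)
  also have "\<dots> \<le> (\<Sum>i\<in>I. (cmod (x i))^2) * (\<Sum>i\<in>I. (cmod (y i))^2)"
    by (rule CS_real)
  finally show ?thesis .
qed

lemma swap3:
  "(\<Sum>x\<in>A. \<Sum>i\<in>I. \<Sum>k\<in>K. F x i k) = (\<Sum>i\<in>I. \<Sum>k\<in>K. \<Sum>x\<in>A. F x i k)"
proof -
  have "(\<Sum>x\<in>A. \<Sum>i\<in>I. \<Sum>k\<in>K. F x i k) = (\<Sum>i\<in>I. \<Sum>x\<in>A. \<Sum>k\<in>K. F x i k)"
    by (rule sum.swap)
  also have "\<dots> = (\<Sum>i\<in>I. \<Sum>k\<in>K. \<Sum>x\<in>A. F x i k)"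
    by (intro sum.cong refl sum.swap)
  finally show ?thesis .
qed

lemma swap5:
  "(\<Sum>x\<in>A. \<Sum>i\<in>I. \<Sum>k\<in>K. \<Sum>j\<in>J. \<Sum>l\<in>M. F x i k j l) = (\<Sum>i\<in>I. \<Sum>k\<in>K. \<Sum>j\<in>J. \<Sum>l\<in>M. \<Sum>x\<in>A. F x i k j l)"
proof -
  have "(\<Sum>x\<in>A. \<Sum>i\<in>I. \<Sum>k\<in>K. \<Sum>j\<in>J. \<Sum>l\<in>M. F x i k j l) = (\<Sum>i\<in>I. \<Sum>k\<in>K. \<Sum>x\<in>A. \<Sum>j\<in>J. \<Sum>l\<in>M. F x i k j l)"
    by (rule swap3)
  also have "\<dots> = (\<Sum>i\<in>I. \<Sum>k\<in>K. \<Sum>j\<in>J. \<Sum>l\<in>M. \<Sum>x\<in>A. F x i k j l)"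
    by (intro sum.cong refl swap3)
  finally show ?thesis .
qed

lemma delta_sum: "i \<in> S \<Longrightarrow> finite S \<Longrightarrow> (\<Sum>l\<in>S. g l * (if l = i then D else 0)) = g i * (D::complex)"
proof -
  assume a: "i \<in> S" "finite S"
  have "(\<Sum>l\<in>S. g l * (if l = i then D else 0)) = (\<Sum>l\<in>S. if l = i then g l * D else 0)"
    by (intro sum.cong) auto
  also have "\<dots> = g i * D" using a by (simp add: sum.delta')
  finally show ?thesis .
qed

lemma iso_nsq:
  fixes d :: nat and M :: "nat \<Rightarrow> nat \<Rightarrow> complex" and x :: "nat \<Rightarrow> complex"
  assumes "\<And>k l. k < d \<Longrightarrow> l < d \<Longrightarrow> (\<Sum>i<d. cnj (M i k) * M i l) = (if k = l then 1 else 0)"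
  shows "(\<Sum>i<d. cnj (\<Sum>k<d. M i k * x k) * (\<Sum>l<d. M i l * x l)) = (\<Sum>k<d. cnj (x k) * x k)"
proof -
  have "(\<Sum>i<d. cnj (\<Sum>k<d. M i k * x k) * (\<Sum>l<d. M i l * x l))
      = (\<Sum>i<d. \<Sum>l<d. \<Sum>k<d. (cnj (x k) * x l) * (cnj (M i k) * M i l))"
    by (simp add: cnj_sum sum_product mult_ac)
  also have "\<dots> = (\<Sum>l<d. \<Sum>k<d. \<Sum>i<d. (cnj (x k) * x l) * (cnj (M i k) * M i l))"
    by (rule swap3)
  also have "\<dots> = (\<Sum>l<d. \<Sum>k<d. (cnj (x k) * x l) * (if k = l then 1 else 0))"
    by (intro sum.cong refl) (auto simp: sum_distrib_left[symmetric] assms)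
  also have "\<dots> = (\<Sum>l<d. cnj (x l) * x l)"
    by (intro sum.cong refl, subst delta_sum) auto
  finally show ?thesis .
qed

lemma mult_idx: "i < dim_row A \<Longrightarrow> j < dim_col B \<Longrightarrow> dim_row B = dim_col A \<Longrightarrow>
  (A * B) $$ (i,j) = (\<Sum>k<dim_col A. A $$ (i,k) * B $$ (k,j))"
  by (simp add: scalar_prod_def lessThan_atLeast0)

lemma dagger_idx[simp]: "i < dim_col A \<Longrightarrow> j < dim_row A \<Longrightarrow> dagger A $$ (i,j) = cnj (A $$ (j,i))"
  by (simp add: dagger_def)
lemma dagger_dims[simp]: "dim_row (dagger A) = dim_col A" "dim_col (dagger A) = dim_row A"
  by (simp_all add: dagger_def)


definition qf :: "nat \<Rightarrow> complex mat \<Rightarrow> (nat \<Rightarrow> complex) \<Rightarrow> complex" where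
  "qf d P w = (\<Sum>i<d. \<Sum>j<d. cnj (w i) * P $$ (i,j) * w j)"

definition nsq :: "nat \<Rightarrow> (nat \<Rightarrow> complex) \<Rightarrow> real" where
  "nsq d w = (\<Sum>i<d. (cmod (w i))^2)"

lemma nsq_eq: "complex_of_real (nsq d w) = (\<Sum>i<d. cnj (w i) * w i)"
  unfolding nsq_def of_real_sum by (intro sum.cong refl) (metis complex_norm_square mult.commute)

lemma qf_real: "cnj (qf (2^length xs) (pauli_string xs) w) = qf (2^length xs) (pauli_string xs) w"
proof -
  let ?d = "2^length xs :: nat" and ?P = "pauli_string xs"
  have "cnj (qf ?d ?P w) = (\<Sum>i<?d. \<Sum>j<?d. cnj (w j) * ?P $$ (j,i) * w i)"
    unfolding qf_def cnj_sum
  proof (intro sum.cong refl)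
    fix i j assume "i \<in> {..<?d}" "j \<in> {..<?d}"
    hence h: "cnj (?P $$ (i,j)) = ?P $$ (j,i)" using ps_herm[of j xs i] by simp
    show "cnj (cnj (w i) * ?P $$ (i,j) * w j) = cnj (w j) * ?P $$ (j,i) * w i"
      by (simp add: h mult_ac)
  qed
  also have "\<dots> = qf ?d ?P w"
    unfolding qf_def by (rule sum.swap)
  finally show ?thesis .
qed

lemma qf_Re: "qf (2^length xs) (pauli_string xs) w = complex_of_real (Re (qf (2^length xs) (pauli_string xs) w))"
  using qf_real[of xs w] by (metis Reals_cnj_iff of_real_Re)

lemma qf_id: "qf (2^n) (pauli_string (replicate n 0)) w = complex_of_real (nsq (2^n) w)"
proof -
  have "qf (2^n) (pauli_string (replicate n 0)) w = (\<Sum>i<2^n. \<Sum>j<2^n. (cnj (w i) * w j) * (if j = i then 1 else 0))"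
    unfolding qf_def by (intro sum.cong refl) (auto simp: ps_id)
  also have "\<dots> = (\<Sum>i<2^n. cnj (w i) * w i)"
    by (intro sum.cong refl, subst delta_sum) auto
  finally show ?thesis by (simp add: nsq_eq)
qed

lemma qf_bound:
  assumes "nsq (2^length xs) w = 1"
  shows "cmod (qf (2^length xs) (pauli_string xs) w) \<le> 1"
proof -
  let ?d = "2^length xs :: nat" and ?P = "pauli_string xs"
  define y where "y i = (\<Sum>j<?d. ?P $$ (i,j) * w j)" for i
  have q: "qf ?d ?P w = (\<Sum>i<?d. cnj (w i) * y i)"
    unfolding qf_def y_def sum_distrib_left by (intro sum.cong refl) (simp only: mult_ac)
  have iso: "(\<Sum>i<?d. cnj (y i) * y i) = (\<Sum>k<?d. cnj (w k) * w k)"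
    unfolding y_def
  proof (rule iso_nsq)
    fix k l assume kl: "k < ?d" "l < ?d"
    have "(\<Sum>i<?d. cnj (?P $$ (i,k)) * ?P $$ (i,l)) = (\<Sum>i<?d. ?P $$ (k,i) * ?P $$ (i,l))"
      using kl by (intro sum.cong refl) (simp add: ps_herm)
    also have "\<dots> = (if k = l then 1 else 0)" using kl by (rule ps_inv)
    finally show "(\<Sum>i<?d. cnj (?P $$ (i,k)) * ?P $$ (i,l)) = (if k = l then 1 else 0)" .
  qed
  have ny: "nsq ?d y = 1"
    using iso assms nsq_eq[of ?d y] nsq_eq[of ?d w] by (metis of_real_eq_1_iff)
  have "(cmod (qf ?d ?P w))^2 \<le> (\<Sum>i<?d. (cmod (cnj (w i)))^2) * (\<Sum>i<?d. (cmod (y i))^2)"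
    unfolding q by (rule CS_cplx)
  also have "\<dots> = 1" using ny assms by (simp add: nsq_def)
  finally have "(cmod (qf ?d ?P w))^2 \<le> 1" .
  thus ?thesis using power2_le_imp_le[of "cmod (qf ?d ?P w)" 1] by simp
qed

lemma qf_QQ:
  "(\<Sum>xs\<in>LL n. qf (2^n) (pauli_string xs) w * qf (2^n) (pauli_string xs) v)
    = 2^n * ((\<Sum>i<2^n. cnj (w i) * v i) * (\<Sum>j<2^n. cnj (v j) * w j))"
proof -
  let ?d = "2^n :: nat"
  let ?c = "\<lambda>i k j l. cnj (w i) * w j * (cnj (v k) * v l)"
  have "(\<Sum>xs\<in>LL n. qf ?d (pauli_string xs) w * qf ?d (pauli_string xs) v)
     = (\<Sum>xs\<in>LL n. \<Sum>i<?d. \<Sum>k<?d. \<Sum>j<?d. \<Sum>l<?d. ?c i k j l * (pauli_string xs $$ (i,j) * pauli_string xs $$ (k,l)))"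
    unfolding qf_def sum_product by (intro sum.cong refl) (simp add: mult_ac)
  also have "\<dots> = (\<Sum>i<?d. \<Sum>k<?d. \<Sum>j<?d. \<Sum>l<?d. \<Sum>xs\<in>LL n. ?c i k j l * (pauli_string xs $$ (i,j) * pauli_string xs $$ (k,l)))"
    by (rule swap5)
  also have "\<dots> = (\<Sum>i<?d. \<Sum>k<?d. \<Sum>j<?d. \<Sum>l<?d. ?c i k j l * (if l = i then (if j = k then 2^n else 0) else 0))"
  proof (intro sum.cong refl)
    fix i k j l assume "i \<in> {..<?d}" "k \<in> {..<?d}" "j \<in> {..<?d}" "l \<in> {..<?d}"
    hence "(\<Sum>xs\<in>LL n. pauli_string xs $$ (i,j) * pauli_string xs $$ (k,l)) = (if l = i then (if j = k then 2^n else 0) else 0)"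
      by (subst ps_compl) auto
    thus "(\<Sum>xs\<in>LL n. ?c i k j l * (pauli_string xs $$ (i,j) * pauli_string xs $$ (k,l))) = ?c i k j l * (if l = i then (if j = k then 2^n else 0) else 0)"
      by (simp only: sum_distrib_left[symmetric])
  qed
  also have "\<dots> = (\<Sum>i<?d. \<Sum>k<?d. \<Sum>j<?d. ?c i k j i * (if j = k then 2^n else 0))"
    by (intro sum.cong refl, subst delta_sum) auto
  also have "\<dots> = (\<Sum>i<?d. \<Sum>k<?d. ?c i k k i * 2^n)"
    by (intro sum.cong refl, subst delta_sum) auto
  also have "\<dots> = (\<Sum>i<?d. \<Sum>k<?d. (cnj (w i) * v i) * (cnj (v k) * w k)) * 2^n"
    unfolding sum_distrib_right by (intro sum.cong refl) (simp only: mult_ac)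
  also have "\<dots> = ((\<Sum>i<2^n. cnj (w i) * v i) * (\<Sum>j<2^n. cnj (v j) * w j)) * 2^n"
    by (simp only: sum_product)
  also have "\<dots> = 2^n * ((\<Sum>i<2^n. cnj (w i) * v i) * (\<Sum>j<2^n. cnj (v j) * w j))"
    by (rule mult.commute)
  finally show ?thesis .
qed

lemma Y_bound:
  fixes a b :: real
  assumes "\<bar>a\<bar> \<le> 1" "\<bar>b\<bar> \<le> 1"
  shows "((a + b) * (a^2 + b^2 - 1))^2 \<le> 2 * (a^2 + b^2)"
proof -
  have a2: "0 \<le> a^2" "a^2 \<le> 1" using assms(1) by (auto simp: abs_le_iff power_le_one_iff abs_square_le_1)
  have b2: "0 \<le> b^2" "b^2 \<le> 1" using assms(2) by (auto simp: abs_square_le_1)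
  have "\<bar>a^2 + b^2 - 1\<bar> \<le> 1" using a2 b2 by (simp add: abs_le_iff)
  hence t: "(a^2 + b^2 - 1)^2 \<le> 1" by (simp add: abs_square_le_1)
  have "((a + b) * (a^2 + b^2 - 1))^2 = (a + b)^2 * (a^2 + b^2 - 1)^2" by (simp add: power_mult_distrib)
  also have "\<dots> \<le> (a + b)^2 * 1" by (rule mult_left_mono[OF t]) simp
  also have "\<dots> \<le> 2 * (a^2 + b^2)"
  proof -
    have "0 \<le> (a - b)^2" by simp
    thus ?thesis by (simp add: power2_eq_square algebra_simps)
  qed
  finally show ?thesis .
qed

lemma key_ineq:
  fixes A B :: "'x \<Rightarrow> real" and S :: "'x set" and D g \<delta> :: real
  assumes fin: "finite S" and e: "e \<in> S"
    and bA: "\<And>P. P \<in> S \<Longrightarrow> \<bar>A P\<bar> \<le> 1" and bB: "\<And>P. P \<in> S \<Longrightarrow> \<bar>B P\<bar> \<le> 1"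
    and Ae: "A e = 1" and Be: "B e = 1"
    and sA: "(\<Sum>P\<in>S. (A P)^2) = D" and sB: "(\<Sum>P\<in>S. (B P)^2) = D"
    and sAB: "(\<Sum>P\<in>S. A P * B P) = D * g"
    and gd: "1 - g \<le> \<delta>^2" and D0: "D \<ge> 0"
  shows "((\<Sum>P\<in>S. (A P)^4) - (\<Sum>P\<in>S. (B P)^4))^2 \<le> 8 * D * (D - 1) * \<delta>^2"
proof -
  define Y where "Y P = (A P + B P) * ((A P)^2 + (B P)^2 - 1)" for P
  define Z where "Z P = A P - B P" for P
  have id: "(A P)^4 - (B P)^4 = Z P * Y P + ((A P)^2 - (B P)^2)" for P
    by (simp add: Y_def Z_def power2_eq_square power4_eq_xxxx algebra_simps)
  have h1: "(\<Sum>P\<in>S. (A P)^4) - (\<Sum>P\<in>S. (B P)^4) = (\<Sum>P\<in>S. Z P * Y P)"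
  proof -
    have "(\<Sum>P\<in>S. (A P)^4) - (\<Sum>P\<in>S. (B P)^4) = (\<Sum>P\<in>S. Z P * Y P + ((A P)^2 - (B P)^2))"
      by (simp add: id sum_subtractf[symmetric])
    also have "\<dots> = (\<Sum>P\<in>S. Z P * Y P) + ((\<Sum>P\<in>S. (A P)^2) - (\<Sum>P\<in>S. (B P)^2))"
      by (simp add: sum.distrib sum_subtractf)
    finally show ?thesis using sA sB by simp
  qed
  have h2: "(\<Sum>P\<in>S. Z P * Y P) = (\<Sum>P\<in>S - {e}. Z P * Y P)"
    using sum.remove[OF fin e, of "\<lambda>P. Z P * Y P"] by (simp add: Z_def Ae Be)
  have cs: "(\<Sum>P\<in>S - {e}. Z P * Y P)^2 \<le> (\<Sum>P\<in>S - {e}. (Z P)^2) * (\<Sum>P\<in>S - {e}. (Y P)^2)"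
    by (rule CS_real)
  have h3: "(\<Sum>P\<in>S - {e}. (Z P)^2) \<le> 2 * D * \<delta>^2"
  proof -
    have "(\<Sum>P\<in>S - {e}. (Z P)^2) \<le> (\<Sum>P\<in>S. (Z P)^2)"
      by (rule sum_mono2) (use fin in auto)
    also have "(\<Sum>P\<in>S. (Z P)^2) = (\<Sum>P\<in>S. (A P)^2) + (\<Sum>P\<in>S. (B P)^2) - 2 * (\<Sum>P\<in>S. A P * B P)"
      by (simp add: Z_def power2_eq_square algebra_simps sum.distrib sum_subtractf sum_distrib_left)
    also have "\<dots> = 2 * D * (1 - g)" using sA sB sAB by (simp add: algebra_simps)
    also have "\<dots> \<le> 2 * D * \<delta>^2" using gd D0 by (intro mult_left_mono) auto
    finally show ?thesis .
  qed
  have h4: "(\<Sum>P\<in>S - {e}. (Y P)^2) \<le> 4 * (D - 1)"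
  proof -
    have "(\<Sum>P\<in>S - {e}. (Y P)^2) \<le> (\<Sum>P\<in>S - {e}. 2 * ((A P)^2 + (B P)^2))"
    proof (rule sum_mono)
      fix P assume "P \<in> S - {e}"
      thus "(Y P)^2 \<le> 2 * ((A P)^2 + (B P)^2)" unfolding Y_def using bA bB by (intro Y_bound) auto
    qed
    also have "\<dots> = 2 * (\<Sum>P\<in>S - {e}. (A P)^2 + (B P)^2)"
      by (rule sum_distrib_left[symmetric])
    also have "\<dots> = 2 * ((\<Sum>P\<in>S. (A P)^2 + (B P)^2) - 2)"
      using sum.remove[OF fin e, of "\<lambda>P. (A P)^2 + (B P)^2"] by (simp add: Ae Be)
    also have "\<dots> = 4 * (D - 1)" using sA sB by (simp add: sum.distrib)
    finally show ?thesis .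
  qed
  have "((\<Sum>P\<in>S. (A P)^4) - (\<Sum>P\<in>S. (B P)^4))^2 \<le> (\<Sum>P\<in>S - {e}. (Z P)^2) * (\<Sum>P\<in>S - {e}. (Y P)^2)"
    using cs h1 h2 by simp
  also have "\<dots> \<le> (2 * D * \<delta>^2) * (4 * (D - 1))"
    by (rule mult_mono[OF h3 h4]) (auto intro: sum_nonneg simp: D0)
  finally show ?thesis by (simp add: algebra_simps)
qed

lemma final_bound:
  fixes x D \<delta> F :: real
  assumes x: "x^2 \<le> 8 * D * (D - 1) * \<delta>^2" and dF: "\<delta> \<le> F" and d0: "0 \<le> \<delta>" and D2: "D \<ge> 2"
  shows "\<bar>x / D\<bar> \<le> (8 * D / (4 + D)) * F"
proof -
  define K where "K = 8 * D / (4 + D)"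
  have K0: "K \<ge> 0" using D2 by (simp add: K_def)
  have poly: "(D - 1) * (4 + D)^2 \<le> 8 * D^3"
  proof -
    have "D^2 * 1 \<le> D^2 * (D - 1)" using D2 by (intro mult_left_mono) auto
    hence "7 * D^2 \<le> 7 * (D^2 * (D - 1))" by simp
    moreover have "0 \<le> 7 * D^2 - 8 * D + 16"
    proof -
      have "0 \<le> 7 * (D - 1)^2 + 6 * D + 9" using D2 by simp
      thus ?thesis by (simp add: power2_eq_square algebra_simps)
    qed
    ultimately show ?thesis by (simp add: power2_eq_square power3_eq_cube algebra_simps)
  qed
  have "(x / D)^2 = x^2 / D^2" by (simp add: power_divide)
  also have "\<dots> \<le> 8 * D * (D - 1) * \<delta>^2 / D^2" using x D2 by (intro divide_right_mono) auto
  also have "\<dots> = (8 * (D - 1) / D) * \<delta>^2" using D2 by (simp add: power2_eq_square field_simps)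
  also have "\<dots> \<le> K^2 * \<delta>^2"
  proof (rule mult_right_mono)
    have pos: "0 < (4 + D)^2" "0 < D" using D2 by auto
    have e1: "8 * (D - 1) / D = (8 * (D - 1) * (4 + D)^2) / (D * (4 + D)^2)" using pos by simp
    have e2: "64 * D^2 / (4 + D)^2 = (64 * D^2 * D) / (D * (4 + D)^2)" using pos by simp
    have num: "8 * (D - 1) * (4 + D)^2 \<le> 64 * D^2 * D"
    proof -
      have "8 * (D - 1) * (4 + D)^2 = 8 * ((D - 1) * (4 + D)^2)" by (simp only: mult.assoc)
      also have "\<dots> \<le> 8 * (8 * D^3)" using poly by simp
      also have "\<dots> = 64 * D^2 * D" by (simp add: power3_eq_cube power2_eq_square)
      finally show ?thesis .
    qed
    have "8 * (D - 1) / D \<le> 64 * D^2 / (4 + D)^2"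
      unfolding e1 e2 using num pos by (intro divide_right_mono) auto
    thus "8 * (D - 1) / D \<le> K^2" by (simp add: K_def power_divide power_mult_distrib)
  qed simp
  also have "\<dots> \<le> K^2 * F^2" using dF d0 by (intro mult_left_mono power_mono) auto
  also have "\<dots> = (K * F)^2" by (simp add: power_mult_distrib)
  finally have "(x / D)^2 \<le> (K * F)^2" .
  hence "\<bar>x / D\<bar> \<le> \<bar>K * F\<bar>" using abs_le_square_iff[of "x / D" "K * F"] by blast
  also have "\<dots> = K * F" using K0 dF d0 by simp
  finally show ?thesis by (simp add: K_def)
qed

lemma zp_dims[simp]: "dim_row (zero_proj n) = 2^n" "dim_col (zero_proj n) = 2^n"
  by (simp_all add: zero_proj_def)
lemma zp_idx: "i < 2^n \<Longrightarrow> j < 2^n \<Longrightarrow> zero_proj n $$ (i,j) = (if i = 0 \<and> j = 0 then 1 else 0)"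
  by (simp add: zero_proj_def)

lemma unitary_carrier: "unitary_mat d U \<Longrightarrow> U \<in> carrier_mat d d" by (simp add: unitary_mat_def)
lemma unitary_right: "unitary_mat d U \<Longrightarrow> U * dagger U = 1\<^sub>m d" by (simp add: unitary_mat_def)
lemma dagger_carrier: "U \<in> carrier_mat d d \<Longrightarrow> dagger U \<in> carrier_mat d d" unfolding carrier_mat_def by simp
lemma unitary_left: "unitary_mat d U \<Longrightarrow> dagger U * U = 1\<^sub>m d"
  by (rule mat_mult_left_right_inverse[OF unitary_carrier dagger_carrier[OF unitary_carrier] unitary_right])

lemma unitary_cols:
  assumes "unitary_mat d U" "k < d" "l < d"
  shows "(\<Sum>i<d. cnj (U $$ (i,k)) * U $$ (i,l)) = (if k = l then 1 else 0)"
proof -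
  have U: "U \<in> carrier_mat d d" using assms(1) by (rule unitary_carrier)
  have "(dagger U * U) $$ (k,l) = (\<Sum>i<dim_col (dagger U). dagger U $$ (k,i) * U $$ (i,l))"
    using U assms by (intro mult_idx) auto
  also have "\<dots> = (\<Sum>i<d. cnj (U $$ (i,k)) * U $$ (i,l))"
    using U assms by (intro sum.cong) auto
  finally have "(dagger U * U) $$ (k,l) = (\<Sum>i<d. cnj (U $$ (i,k)) * U $$ (i,l))" .
  moreover have "(dagger U * U) $$ (k,l) = (if k = l then 1 else 0)"
    using unitary_left[OF assms(1)] assms by simp
  ultimately show ?thesis by simp
qed

lemma CZ_idx:
  assumes C: "C \<in> carrier_mat (2^n) (2^n)" and k: "k < 2^n" and m: "m < 2^n"
  shows "(C * zero_proj n) $$ (k,m) = (if m = 0 then C $$ (k,0) else 0)"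
proof -
  have "(C * zero_proj n) $$ (k,m) = (\<Sum>l<dim_col C. C $$ (k,l) * zero_proj n $$ (l,m))"
    using C k m by (intro mult_idx) auto
  also have "\<dots> = (\<Sum>l<2^n. C $$ (k,l) * (if l = 0 then (if m = 0 then 1 else 0) else 0))"
    using m C by (intro sum.cong) (auto simp: zp_idx)
  also have "\<dots> = C $$ (k,0) * (if m = 0 then 1 else 0)"
    by (subst delta_sum) auto
  finally show ?thesis by simp
qed

lemma rho_idx:
  assumes C: "C \<in> carrier_mat (2^n) (2^n)" and k: "k < 2^n" and l: "l < 2^n"
  shows "(C * zero_proj n * dagger C) $$ (k,l) = C $$ (k,0) * cnj (C $$ (l,0))"
proof -
  have "(C * zero_proj n * dagger C) $$ (k,l) = (\<Sum>m<dim_col (C * zero_proj n). (C * zero_proj n) $$ (k,m) * dagger C $$ (m,l))"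
    using C k l by (intro mult_idx) auto
  also have "\<dots> = (\<Sum>m<2^n. (C $$ (k,0) * cnj (C $$ (l,m))) * (if m = 0 then 1 else 0))"
  proof (rule sum.cong)
    fix m :: nat assume "m \<in> {..<2^n}"
    hence m: "m < 2^n" by simp
    show "(C * zero_proj n) $$ (k,m) * dagger C $$ (m,l) = (C $$ (k,0) * cnj (C $$ (l,m))) * (if m = 0 then 1 else 0)"
      unfolding CZ_idx[OF C k m] using C l m by auto
  qed simp
  also have "\<dots> = C $$ (k,0) * cnj (C $$ (l,0))"
    by (subst delta_sum) auto
  finally show ?thesis .
qed

lemma rhoU_idx:
  assumes U: "U \<in> carrier_mat d d" and R: "R \<in> carrier_mat d d"
    and Ridx: "\<And>k l. k < d \<Longrightarrow> l < d \<Longrightarrow> R $$ (k,l) = u k * cnj (u l)"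
    and j: "j < d" and i: "i < d"
  shows "(U * R * dagger U) $$ (j,i) = (\<Sum>k<d. U $$ (j,k) * u k) * cnj (\<Sum>k<d. U $$ (i,k) * u k)"
proof -
  let ?W = "\<Sum>k<d. U $$ (j,k) * u k"
  have UR: "(U * R) $$ (j,l) = ?W * cnj (u l)" if "l < d" for l
  proof -
    have "(U * R) $$ (j,l) = (\<Sum>k<dim_col U. U $$ (j,k) * R $$ (k,l))"
      using U R j that by (intro mult_idx) auto
    also have "\<dots> = (\<Sum>k<d. U $$ (j,k) * u k * cnj (u l))"
      using that U by (intro sum.cong) (auto simp: Ridx mult.assoc)
    also have "\<dots> = ?W * cnj (u l)" by (rule sum_distrib_right[symmetric])
    finally show ?thesis .
  qed
  have "(U * R * dagger U) $$ (j,i) = (\<Sum>l<dim_col (U * R). (U * R) $$ (j,l) * dagger U $$ (l,i))"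
    using U R j i by (intro mult_idx) auto
  also have "\<dots> = (\<Sum>l<d. ?W * (cnj (u l) * cnj (U $$ (i,l))))"
  proof (rule sum.cong)
    fix l :: nat assume "l \<in> {..<d}"
    hence l: "l < d" by simp
    show "(U * R) $$ (j,l) * dagger U $$ (l,i) = ?W * (cnj (u l) * cnj (U $$ (i,l)))"
      unfolding UR[OF l] using U i l by (simp add: mult.assoc)
  qed (use R in simp)
  also have "\<dots> = ?W * (\<Sum>l<d. cnj (u l) * cnj (U $$ (i,l)))"
    by (rule sum_distrib_left[symmetric])
  also have "(\<Sum>l<d. cnj (u l) * cnj (U $$ (i,l))) = cnj (\<Sum>k<d. U $$ (i,k) * u k)"
    unfolding cnj_sum by (intro sum.cong refl) simp
  finally show ?thesis .
qed

lemma trace_link: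
  assumes P: "P \<in> carrier_mat d d" and R: "R \<in> carrier_mat d d"
    and Ridx: "\<And>j i. j < d \<Longrightarrow> i < d \<Longrightarrow> R $$ (j,i) = w j * cnj (w i)"
  shows "mtrace (P * R) = qf d P w"
proof -
  have "mtrace (P * R) = (\<Sum>i<d. (P * R) $$ (i,i))" using P by (simp add: mtrace_def)
  also have "\<dots> = (\<Sum>i<d. \<Sum>j<d. P $$ (i,j) * R $$ (j,i))"
  proof (rule sum.cong)
    fix i assume "i \<in> {..<d}"
    hence "(P * R) $$ (i,i) = (\<Sum>j<dim_col P. P $$ (i,j) * R $$ (j,i))" using P R by (intro mult_idx) auto
    thus "(P * R) $$ (i,i) = (\<Sum>j<d. P $$ (i,j) * R $$ (j,i))" using P by simp
  qed simp
  also have "\<dots> = qf d P w"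
    unfolding qf_def by (intro sum.cong refl) (simp add: Ridx mult_ac)
  finally show ?thesis .
qed



lemma cmod_diff_sq: "(cmod (a - b))^2 = (cmod a)^2 + (cmod b)^2 - 2 * Re (cnj a * b)"
  unfolding cmod_power2 by (simp add: power2_eq_square algebra_simps)

lemma nsq_diff: "nsq d (\<lambda>i. w i - v i) = nsq d w + nsq d v - 2 * Re (\<Sum>i<d. cnj (w i) * v i)"
  by (simp add: nsq_def cmod_diff_sq sum.distrib sum_subtractf sum_distrib_left Re_sum)

lemma nsq_nonneg: "0 \<le> nsq d w" by (simp add: nsq_def sum_nonneg)

lemma gap_bound:
  assumes "nsq d w = 1" "nsq d v = 1"
  shows "1 - (cmod (\<Sum>i<d. cnj (w i) * v i))^2 \<le> nsq d (\<lambda>i. w i - v i)"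
proof -
  let ?c = "\<Sum>i<d. cnj (w i) * v i"
  have "Re ?c \<le> cmod ?c" by (rule complex_Re_le_cmod)
  moreover have "0 \<le> (1 - cmod ?c)^2" by simp
  ultimately have "1 - (cmod ?c)^2 \<le> 2 - 2 * Re ?c" by (simp add: power2_eq_square algebra_simps)
  thus ?thesis using assms by (simp add: nsq_diff)
qed

lemma AB_sum:
  "(\<Sum>xs\<in>LL n. Re (qf (2^n) (pauli_string xs) w) * Re (qf (2^n) (pauli_string xs) v))
     = 2^n * (cmod (\<Sum>i<2^n. cnj (w i) * v i))^2"
proof -
  let ?c = "\<Sum>i<2^n. cnj (w i) * v i"
  have pt: "Re (qf (2^n) (pauli_string xs) w) * Re (qf (2^n) (pauli_string xs) v)
      = Re (qf (2^n) (pauli_string xs) w * qf (2^n) (pauli_string xs) v)" if "xs \<in> LL n" for xs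
  proof -
    have l: "length xs = n" using that by (simp add: LL_def)
    have "qf (2^n) (pauli_string xs) w * qf (2^n) (pauli_string xs) v
        = complex_of_real (Re (qf (2^n) (pauli_string xs) w)) * complex_of_real (Re (qf (2^n) (pauli_string xs) v))"
      using qf_Re[of xs w] qf_Re[of xs v] l by metis
    thus ?thesis by simp
  qed
  have cc: "(\<Sum>j<2^n. cnj (v j) * w j) = cnj ?c"
    unfolding cnj_sum by (intro sum.cong refl) (simp add: mult.commute)
  have "(\<Sum>xs\<in>LL n. Re (qf (2^n) (pauli_string xs) w) * Re (qf (2^n) (pauli_string xs) v))
     = Re (\<Sum>xs\<in>LL n. qf (2^n) (pauli_string xs) w * qf (2^n) (pauli_string xs) v)"
    unfolding Re_sum by (intro sum.cong refl pt)
  also have "\<dots> = Re (2^n * (?c * cnj ?c))" unfolding qf_QQ cc ..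
  also have "?c * cnj ?c = complex_of_real ((cmod ?c)^2)" by (rule complex_norm_square[symmetric])
  finally show ?thesis by simp
qed

lemma nsq_unit_sum: "nsq d w = 1 \<Longrightarrow> (\<Sum>i<d. cnj (w i) * w i) = 1"
  using nsq_eq[of d w] by simp

lemma frob_eq: "A \<in> carrier_mat d d \<Longrightarrow> B \<in> carrier_mat d d \<Longrightarrow>
   frob_norm (A - B) = sqrt (\<Sum>i<d. \<Sum>j<d. (cmod (A $$ (i,j) - B $$ (i,j)))^2)"
  unfolding frob_norm_def by (intro arg_cong[where f=sqrt] sum.cong refl) auto

lemma rho_carrier: "C \<in> carrier_mat (2^n) (2^n) \<Longrightarrow> C * zero_proj n * dagger C \<in> carrier_mat (2^n) (2^n)"
  unfolding carrier_mat_def by simp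

lemma conj_carrier: "A \<in> carrier_mat d d \<Longrightarrow> R \<in> carrier_mat d d \<Longrightarrow> A * R * dagger A \<in> carrier_mat d d"
  unfolding carrier_mat_def by simp

lemma ps_carrier: "pauli_string xs \<in> carrier_mat (2^length xs) (2^length xs)"
  unfolding carrier_mat_def by simp

lemma state_bound:
  fixes n :: nat and U V C :: "complex mat"
  assumes n: "n \<ge> 1" and uU: "unitary_mat (2^n) U" and uV: "unitary_mat (2^n) V" and uC: "unitary_mat (2^n) C"
  shows "\<bar>M_lin_state n (U * (C * zero_proj n * dagger C) * dagger U) - M_lin_state n (V * (C * zero_proj n * dagger C) * dagger V)\<bar>
     \<le> (8 * 2^n / (4 + 2^n)) * frob_norm (U - V)"
proof -
  let ?d = "2^n :: nat"
  define \<rho> where "\<rho> = C * zero_proj n * dagger C"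
  define u where "u k = C $$ (k,0)" for k
  define w where "w i = (\<Sum>k<?d. U $$ (i,k) * u k)" for i
  define v where "v i = (\<Sum>k<?d. V $$ (i,k) * u k)" for i
  have U: "U \<in> carrier_mat ?d ?d" using uU by (rule unitary_carrier)
  have V: "V \<in> carrier_mat ?d ?d" using uV by (rule unitary_carrier)
  have C: "C \<in> carrier_mat ?d ?d" using uC by (rule unitary_carrier)
  have \<rho>c: "\<rho> \<in> carrier_mat ?d ?d" unfolding \<rho>_def by (rule rho_carrier[OF C])
  have \<rho>idx: "\<And>k l. k < ?d \<Longrightarrow> l < ?d \<Longrightarrow> \<rho> $$ (k,l) = u k * cnj (u l)"
    unfolding \<rho>_def u_def using C by (rule rho_idx)
  have RUc: "U * \<rho> * dagger U \<in> carrier_mat ?d ?d" by (rule conj_carrier[OF U \<rho>c])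
  have RVc: "V * \<rho> * dagger V \<in> carrier_mat ?d ?d" by (rule conj_carrier[OF V \<rho>c])
  have RUidx: "\<And>j i. j < ?d \<Longrightarrow> i < ?d \<Longrightarrow> (U * \<rho> * dagger U) $$ (j,i) = w j * cnj (w i)"
    unfolding w_def by (rule rhoU_idx[OF U \<rho>c \<rho>idx])
  have RVidx: "\<And>j i. j < ?d \<Longrightarrow> i < ?d \<Longrightarrow> (V * \<rho> * dagger V) $$ (j,i) = v j * cnj (v i)"
    unfolding v_def by (rule rhoU_idx[OF V \<rho>c \<rho>idx])
  have nu: "nsq ?d u = 1"
  proof -
    have "(\<Sum>i<?d. cnj (C $$ (i,0)) * C $$ (i,0)) = 1" using unitary_cols[OF uC, of 0 0] by simp
    hence "complex_of_real (nsq ?d u) = 1" unfolding nsq_eq u_def .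
    thus ?thesis by simp
  qed
  have nw: "nsq ?d w = 1"
  proof -
    have "(\<Sum>i<?d. cnj (w i) * w i) = (\<Sum>k<?d. cnj (u k) * u k)"
      unfolding w_def by (rule iso_nsq) (rule unitary_cols[OF uU])
    hence "complex_of_real (nsq ?d w) = complex_of_real (nsq ?d u)" unfolding nsq_eq .
    thus ?thesis using nu by simp
  qed
  have nv: "nsq ?d v = 1"
  proof -
    have "(\<Sum>i<?d. cnj (v i) * v i) = (\<Sum>k<?d. cnj (u k) * u k)"
      unfolding v_def by (rule iso_nsq) (rule unitary_cols[OF uV])
    hence "complex_of_real (nsq ?d v) = complex_of_real (nsq ?d u)" unfolding nsq_eq .
    thus ?thesis using nu by simp
  qed
  define \<delta> where "\<delta> = sqrt (nsq ?d (\<lambda>i. w i - v i))"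
  have \<delta>0: "0 \<le> \<delta>" by (simp add: \<delta>_def nsq_nonneg)
  have \<delta>sq: "\<delta>^2 = nsq ?d (\<lambda>i. w i - v i)" by (simp add: \<delta>_def nsq_nonneg)
  have \<delta>F: "\<delta> \<le> frob_norm (U - V)"
  proof -
    have "nsq ?d (\<lambda>i. w i - v i) \<le> (\<Sum>i<?d. \<Sum>k<?d. (cmod (U $$ (i,k) - V $$ (i,k)))^2)"
      unfolding nsq_def
    proof (rule sum_mono)
      fix i assume "i \<in> {..<?d}"
      have "w i - v i = (\<Sum>k<?d. (U $$ (i,k) - V $$ (i,k)) * u k)"
        unfolding w_def v_def by (simp add: sum_subtractf[symmetric] left_diff_distrib)
      hence "(cmod (w i - v i))^2 \<le> (\<Sum>k<?d. (cmod (U $$ (i,k) - V $$ (i,k)))^2) * (\<Sum>k<?d. (cmod (u k))^2)"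
        using CS_cplx[of "\<lambda>k. U $$ (i,k) - V $$ (i,k)" u "{..<?d}"] by simp
      also have "\<dots> = (\<Sum>k<?d. (cmod (U $$ (i,k) - V $$ (i,k)))^2)" using nu by (simp add: nsq_def)
      finally show "(cmod (w i - v i))^2 \<le> (\<Sum>k<?d. (cmod (U $$ (i,k) - V $$ (i,k)))^2)" .
    qed
    thus ?thesis unfolding \<delta>_def frob_eq[OF U V] by (rule real_sqrt_le_mono)
  qed
  define A where "A xs = Re (qf ?d (pauli_string xs) w)" for xs
  define B where "B xs = Re (qf ?d (pauli_string xs) v)" for xs
  have Mform: "M_lin_state n (X * \<rho> * dagger X) = 1 - 1 / 2^n * (\<Sum>xs\<in>LL n. (Re (qf ?d (pauli_string xs) y))^4)"
    if Xc: "X * \<rho> * dagger X \<in> carrier_mat ?d ?d"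
      and Xidx: "\<And>j i. j < ?d \<Longrightarrow> i < ?d \<Longrightarrow> (X * \<rho> * dagger X) $$ (j,i) = y j * cnj (y i)" for X y
  proof -
    have "(\<Sum>P\<in>paulis n. (Re (mtrace (P * (X * \<rho> * dagger X))))^4)
        = (\<Sum>xs\<in>LL n. (Re (mtrace (pauli_string xs * (X * \<rho> * dagger X))))^4)"
      by (rule sum_paulis)
    also have "\<dots> = (\<Sum>xs\<in>LL n. (Re (qf ?d (pauli_string xs) y))^4)"
    proof (rule sum.cong[OF refl])
      fix xs assume "xs \<in> LL n"
      hence "length xs = n" by (simp add: LL_def)
      hence P: "pauli_string xs \<in> carrier_mat ?d ?d" using ps_carrier[of xs] by simp
      show "(Re (mtrace (pauli_string xs * (X * \<rho> * dagger X))))^4 = (Re (qf ?d (pauli_string xs) y))^4"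
        by (subst trace_link[OF P Xc Xidx]) auto
    qed
    finally show ?thesis by (simp add: M_lin_state_def)
  qed
  have MU: "M_lin_state n (U * \<rho> * dagger U) = 1 - 1 / 2^n * (\<Sum>xs\<in>LL n. (A xs)^4)"
    unfolding A_def by (rule Mform[OF RUc RUidx])
  have MV: "M_lin_state n (V * \<rho> * dagger V) = 1 - 1 / 2^n * (\<Sum>xs\<in>LL n. (B xs)^4)"
    unfolding B_def by (rule Mform[OF RVc RVidx])
  define e where "e = replicate n (0::nat)"
  have eL: "e \<in> LL n" by (auto simp: e_def LL_def set_replicate_conv_if)
  have bA: "\<bar>A xs\<bar> \<le> 1" if "xs \<in> LL n" for xs
  proof -
    have l: "length xs = n" using that by (simp add: LL_def)
    have "\<bar>A xs\<bar> \<le> cmod (qf ?d (pauli_string xs) w)" unfolding A_def by (rule abs_Re_le_cmod)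
    also have "\<dots> \<le> 1" using qf_bound[of xs w] nw l by simp
    finally show ?thesis .
  qed
  have bB: "\<bar>B xs\<bar> \<le> 1" if "xs \<in> LL n" for xs
  proof -
    have l: "length xs = n" using that by (simp add: LL_def)
    have "\<bar>B xs\<bar> \<le> cmod (qf ?d (pauli_string xs) v)" unfolding B_def by (rule abs_Re_le_cmod)
    also have "\<dots> \<le> 1" using qf_bound[of xs v] nv l by simp
    finally show ?thesis .
  qed
  have Ae: "A e = 1" unfolding A_def e_def qf_id nw by simp
  have Be: "B e = 1" unfolding B_def e_def qf_id nv by simp
  have sA: "(\<Sum>xs\<in>LL n. (A xs)^2) = 2^n"
    using AB_sum[of n w w] nsq_unit_sum[OF nw] unfolding A_def by (simp add: power2_eq_square)
  have sB: "(\<Sum>xs\<in>LL n. (B xs)^2) = 2^n"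
    using AB_sum[of n v v] nsq_unit_sum[OF nv] unfolding B_def by (simp add: power2_eq_square)
  have sAB: "(\<Sum>xs\<in>LL n. A xs * B xs) = 2^n * (cmod (\<Sum>i<?d. cnj (w i) * v i))^2"
    unfolding A_def B_def by (rule AB_sum)
  have gd: "1 - (cmod (\<Sum>i<?d. cnj (w i) * v i))^2 \<le> \<delta>^2"
    unfolding \<delta>sq by (rule gap_bound[OF nw nv])
  have key: "((\<Sum>xs\<in>LL n. (A xs)^4) - (\<Sum>xs\<in>LL n. (B xs)^4))^2 \<le> 8 * 2^n * (2^n - 1) * \<delta>^2"
    using key_ineq[OF LL_finite eL bA bB Ae Be sA sB sAB gd] by simp
  have D2: "(2::real) \<le> 2^n" using n by (metis One_nat_def power_increasing power_one_right zero_less_numeral one_le_numeral)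
  have fb: "\<bar>((\<Sum>xs\<in>LL n. (A xs)^4) - (\<Sum>xs\<in>LL n. (B xs)^4)) / 2^n\<bar> \<le> (8 * 2^n / (4 + 2^n)) * frob_norm (U - V)"
    by (rule final_bound[OF key \<delta>F \<delta>0 D2])
  have "M_lin_state n (U * \<rho> * dagger U) - M_lin_state n (V * \<rho> * dagger V)
      = - (((\<Sum>xs\<in>LL n. (A xs)^4) - (\<Sum>xs\<in>LL n. (B xs)^4)) / 2^n)"
    unfolding MU MV by (simp add: field_simps)
  thus ?thesis using fb unfolding \<rho>_def by simp
qed

theorem mainTheorem10:
  fixes n :: nat and U V :: "complex mat"
  assumes "n \<ge> 1"
    and "unitary_mat (2^n) U" and "unitary_mat (2^n) V"
  shows "\<bar>M_lin n U - M_lin n V\<bar> \<le> (8 * 2^n / (4 + 2^n)) * frob_norm (U - V)"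
proof -
  let ?K = "(8 * 2^n / (4 + 2^n)) * frob_norm (U - V) :: real"
  let ?f = "\<lambda>W \<rho>. M_lin_state n (W * \<rho> * dagger W)"
  have F0: "0 \<le> frob_norm (U - V)" unfolding frob_norm_def by (intro real_sqrt_ge_zero sum_nonneg) auto
  have K0: "0 \<le> ?K" using F0 by (intro mult_nonneg_nonneg divide_nonneg_nonneg) auto
  have pt: "\<bar>?f U \<rho> - ?f V \<rho>\<bar> \<le> ?K" if rho: "\<rho> \<in> STAB n" for \<rho>
  proof -
    obtain C where C: "clifford n C" "\<rho> = C * zero_proj n * dagger C"
      using rho unfolding STAB_def by blast
    have uC: "unitary_mat (2^n) C" using C(1) by (simp add: clifford_def)
    show ?thesis unfolding C(2) by (rule state_bound[OF assms uC])
  qed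
  show ?thesis
  proof (cases "finite (STAB n) \<and> STAB n \<noteq> {}")
    case True
    hence fin: "finite (STAB n)" and N: "card (STAB n) > 0" by (auto simp: card_gt_0_iff)
    have "M_lin n U - M_lin n V = (\<Sum>\<rho>\<in>STAB n. ?f U \<rho> - ?f V \<rho>) / real (card (STAB n))"
      by (simp add: M_lin_def sum_subtractf diff_divide_distrib)
    hence "\<bar>M_lin n U - M_lin n V\<bar> = \<bar>\<Sum>\<rho>\<in>STAB n. ?f U \<rho> - ?f V \<rho>\<bar> / real (card (STAB n))"
      by simp
    also have "\<dots> \<le> (\<Sum>\<rho>\<in>STAB n. \<bar>?f U \<rho> - ?f V \<rho>\<bar>) / real (card (STAB n))"
      by (intro divide_right_mono sum_abs) simp
    also have "\<dots> \<le> (\<Sum>\<rho>\<in>STAB n. ?K) / real (card (STAB n))"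
      by (intro divide_right_mono sum_mono pt) simp_all
    also have "\<dots> = ?K" using N by simp
    finally show ?thesis .
  next
    case False
    hence "card (STAB n) = 0" by auto
    hence "M_lin n U = 0" "M_lin n V = 0" by (simp_all add: M_lin_def)
    thus ?thesis using K0 by simp
  qed
qed

end
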